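(* There is no $(4,1,p)$-QRA coding with $p>1/2$. That is, there do not exist a real number $p>1/2$, one-qubit density operators $\rho_x$ (positive semidefinite $2\times 2$ complex matrices of trace $1$) for $x\in\{0,1\}^4$, and POVMs $\{E^i_0,E^i_1\}$ for $i\in\{1,2,3,4\}$ such that $\mathrm{Tr}(E^i_{x_i}\rho_x)\ge p$ for all $x\in\{0,1\}^4$ and all $i\in\{1,2,3,4\}$, where $x_i$ denotes the $i$-th bit of $x$.
   Context: An $(n,m,p)$-quantum random access (QRA) coding is a map assigning to each $n$-bit string $x\in\{0,1\}^n$ an $m$-qubit state $\rho_x$ (a positive semidefinite trace-one operator on $\mathbb{C}^{2^m}$) such that for every $i\in\{1,\dots,n\}$ there is a POVM $E^i=\{E^i_0,E^i_1\}$ (i.e. $E^i_0,E^i_1$ are positive semidefinite Hermitian operators on $\mathbb{C}^{2^m}$ with $E^i_0+E^i_1=I$) satisfying $\mathrm{Tr}(E^i_{x_i}\rho_x)\ge p$ for all $x\in\{0,1\}^n$, where $x_i$ is the $i$-th bit of $x$. *)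

theory Defs
  imports "HOL-Analysis.Analysis"
begin

definition trace2 :: "complex^2^2 \<Rightarrow> complex" where
  "trace2 A = (\<Sum>i\<in>UNIV. A $ i $ i)"

definition hermitian2 :: "complex^2^2 \<Rightarrow> bool" where
  "hermitian2 A \<longleftrightarrow> (\<forall>i j. A $ i $ j = cnj (A $ j $ i))"

definition psd2 :: "complex^2^2 \<Rightarrow> bool" where
  "psd2 A \<longleftrightarrow> hermitian2 A \<and>
     (\<forall>v::complex^2. (\<Sum>i\<in>UNIV. \<Sum>j\<in>UNIV. cnj (v $ i) * A $ i $ j * v $ j) \<in> \<real> \<and>
                      0 \<le> Re (\<Sum>i\<in>UNIV. \<Sum>j\<in>UNIV. cnj (v $ i) * A $ i $ j * v $ j))"

definition density2 :: "complex^2^2 \<Rightarrow> bool" where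
  "density2 \<rho> \<longleftrightarrow> psd2 \<rho> \<and> trace2 \<rho> = 1"

definition povm2 :: "complex^2^2 \<Rightarrow> complex^2^2 \<Rightarrow> bool" where
  "povm2 E0 E1 \<longleftrightarrow> psd2 E0 \<and> psd2 E1 \<and> E0 + E1 = mat 1"

definition bitstrings4 :: "(nat \<Rightarrow> bool) set" where
  "bitstrings4 = {x. \<forall>i. i \<notin> {1..4} \<longrightarrow> x i = False}"

end

theory Submission imports Defs begin

lemma no_inj_43: "linear (f::real^4\<Rightarrow>real^3) \<Longrightarrow> inj f \<Longrightarrow> False"
proof -
  assume l: "linear f" and i: "inj f"
  have "dim (range f) = dim (UNIV :: (real^4) set)"
    using dim_image_eq[OF l] i by (metis inj_on_subset subset_UNIV)
  moreover have "dim (range f) \<le> 3" using dim_subset_UNIV_cart[of "range f"] by simp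
  moreover have "dim (UNIV :: (real^4) set) = 4" by simp
  ultimately show False by simp
qed

lemma dep4:
  fixes v :: "nat \<Rightarrow> real^3"
  shows "\<exists>l::nat\<Rightarrow>real. (l 1 \<noteq> 0 \<or> l 2 \<noteq> 0 \<or> l 3 \<noteq> 0 \<or> l 4 \<noteq> 0) \<and>
     l 1 *\<^sub>R v 1 + l 2 *\<^sub>R v 2 + l 3 *\<^sub>R v 3 + l 4 *\<^sub>R v 4 = 0"
proof -
  define f where "f = (\<lambda>c::real^4. c$1 *\<^sub>R v 1 + c$2 *\<^sub>R v 2 + c$3 *\<^sub>R v 3 + c$4 *\<^sub>R v 4)"
  have lf: "linear f"
    by (rule linearI) (auto simp: f_def algebra_simps)
  hence "\<not> inj f" using no_inj_43 by blast
  then obtain c where c: "c \<noteq> 0" "f c = 0" using linear_injective_0[OF lf] by blast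
  have "c$1 \<noteq> 0 \<or> c$2 \<noteq> 0 \<or> c$3 \<noteq> 0 \<or> c$4 \<noteq> 0"
    using c(1) by (auto simp: vec_eq_iff forall_4)
  thus ?thesis using c(2) unfolding f_def
    by (intro exI[of _ "\<lambda>n. if n = 1 then c$1 else if n = 2 then c$2 else if n = 3 then c$3 else c$4"]) auto
qed

lemma trace_formula:
  assumes "hermitian2 F" "hermitian2 \<rho>" "trace2 \<rho> = 1"
  shows "Re (trace2 (F ** \<rho>)) = Re (F$2$2) + Re (F$1$1 - F$2$2) * Re (\<rho>$1$1)
     + 2 * Re (F$1$2) * Re (\<rho>$1$2) + 2 * Im (F$1$2) * Im (\<rho>$1$2)"
proof -
  have h: "F$2$1 = cnj (F$1$2)" "\<rho>$2$1 = cnj (\<rho>$1$2)" "Im (F$1$1) = 0" "Im (F$2$2) = 0"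
    "Im (\<rho>$1$1) = 0" "Im (\<rho>$2$2) = 0"
  proof -
    have e: "F$1$1 = cnj (F$1$1)" "F$2$2 = cnj (F$2$2)" "\<rho>$1$1 = cnj (\<rho>$1$1)" "\<rho>$2$2 = cnj (\<rho>$2$2)"
      using assms(1,2) unfolding hermitian2_def by blast+
    have z: "\<And>z. z = cnj z \<Longrightarrow> Im z = 0"
      by (metis add.inverse_unique cnj.sel(2) add.commute add.right_inverse minus_equation_iff equation_minus_iff neg_equal_zero)
    show "F$2$1 = cnj (F$1$2)" "\<rho>$2$1 = cnj (\<rho>$1$2)"
      using assms(1,2) unfolding hermitian2_def by blast+
    show "Im (F$1$1) = 0" "Im (F$2$2) = 0" "Im (\<rho>$1$1) = 0" "Im (\<rho>$2$2) = 0"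
      using e z by blast+
  qed
  have "\<rho>$1$1 + \<rho>$2$2 = 1" using assms(3) by (simp add: trace2_def sum_2)
  hence t: "Re (\<rho>$2$2) = 1 - Re (\<rho>$1$1)" by (metis one_complex.simps(1) plus_complex.simps(1) add_diff_cancel_left')
  show ?thesis unfolding trace2_def matrix_matrix_mult_def
    by (simp add: sum_2 h t algebra_simps)
qed
lemma t1:
  fixes l G p :: real
  assumes "0 < l \<Longrightarrow> G \<le> 1 - p" "l \<le> 0 \<Longrightarrow> p \<le> G"
  shows "l * (G - 1/2) \<le> - ((p - 1/2) * \<bar>l\<bar>)"
proof (cases "0 < l")
  case True
  hence "l * (G - 1/2) \<le> l * (1/2 - p)" using assms(1) by (intro mult_left_mono) auto
  thus ?thesis using True by (simp add: algebra_simps)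
next
  case False
  hence "l * (G - 1/2) \<le> l * (p - 1/2)" using assms(2) by (intro mult_left_mono_neg) auto
  thus ?thesis using False by (simp add: algebra_simps)
qed

lemma t2:
  fixes l G p :: real
  assumes "l < 0 \<Longrightarrow> G \<le> 1 - p" "0 \<le> l \<Longrightarrow> p \<le> G"
  shows "l * (G - 1/2) \<ge> (p - 1/2) * \<bar>l\<bar>"
proof (cases "l < 0")
  case True
  hence "l * (G - 1/2) \<ge> l * (1/2 - p)" using assms(1) by (intro mult_left_mono_neg) auto
  thus ?thesis using True by (simp add: algebra_simps)
next
  case False
  hence "l * (G - 1/2) \<ge> l * (p - 1/2)" using assms(2) by (intro mult_left_mono) auto
  thus ?thesis using False by (simp add: algebra_simps)
qed

lemma trace_sub: "trace2 ((mat 1 - A) ** C) = trace2 C - trace2 (A ** C)"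
  unfolding trace2_def matrix_matrix_mult_def mat_def by (simp add: sum_2 algebra_simps)

theorem theorem1:
  "\<not> (\<exists>(p::real) (\<rho>::(nat \<Rightarrow> bool) \<Rightarrow> complex^2^2) (E::nat \<Rightarrow> bool \<Rightarrow> complex^2^2).
        p > 1/2 \<and>
        (\<forall>x\<in>bitstrings4. density2 (\<rho> x)) \<and>
        (\<forall>i\<in>{1..4}. povm2 (E i False) (E i True)) \<and>
        (\<forall>x\<in>bitstrings4. \<forall>i\<in>{1..4}. Re (trace2 (E i (x i) ** \<rho> x)) \<ge> p))"
proof
  assume "\<exists>(p::real) (\<rho>::(nat \<Rightarrow> bool) \<Rightarrow> complex^2^2) (E::nat \<Rightarrow> bool \<Rightarrow> complex^2^2).
        p > 1/2 \<and>
        (\<forall>x\<in>bitstrings4. density2 (\<rho> x)) \<and>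
        (\<forall>i\<in>{1..4}. povm2 (E i False) (E i True)) \<and>
        (\<forall>x\<in>bitstrings4. \<forall>i\<in>{1..4}. Re (trace2 (E i (x i) ** \<rho> x)) \<ge> p)"
  then obtain p \<rho> E where pp: "p > 1/2" and dens: "\<forall>x\<in>bitstrings4. density2 (\<rho> x)"
    and pv: "\<forall>i\<in>{1..4::nat}. povm2 (E i False) (E i True)"
    and succ: "\<forall>x\<in>bitstrings4. \<forall>i\<in>{1..4}. Re (trace2 (E i (x i) ** \<rho> x)) \<ge> p"
    by blast
  define F where "F i = E i False" for i
  define G where "G x i = Re (trace2 (F i ** \<rho> x))" for x i
  have hF: "hermitian2 (F i)" if "i \<in> {1..4}" for i
    using pv that unfolding F_def povm2_def psd2_def by blast
  have hr: "hermitian2 (\<rho> x)" "trace2 (\<rho> x) = 1" if "x \<in> bitstrings4" for x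
    using dens that unfolding density2_def psd2_def by blast+
  have G0: "p \<le> G x i" if "x \<in> bitstrings4" "i \<in> {1..4}" "\<not> x i" for x i
    using succ that unfolding G_def F_def by (metis (full_types))
  have G1: "G x i \<le> 1 - p" if "x \<in> bitstrings4" "i \<in> {1..4}" "x i" for x i
  proof -
    have "E i True = mat 1 - F i" using pv that(2) unfolding povm2_def F_def
      by (metis add_diff_cancel_left')
    hence "Re (trace2 (E i True ** \<rho> x)) = 1 - G x i"
      using hr(2)[OF that(1)] by (simp add: trace_sub G_def)
    moreover have "Re (trace2 (E i True ** \<rho> x)) \<ge> p" using succ that by (metis (full_types))
    ultimately show ?thesis by simp
  qed
  define w where "w i = (vector [Re (F i$1$1 - F i$2$2), Re (F i$1$2), Im (F i$1$2)] :: real^3)" for i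
  obtain l :: "nat \<Rightarrow> real" where lnz: "l 1 \<noteq> 0 \<or> l 2 \<noteq> 0 \<or> l 3 \<noteq> 0 \<or> l 4 \<noteq> 0"
    and ls: "l 1 *\<^sub>R w 1 + l 2 *\<^sub>R w 2 + l 3 *\<^sub>R w 3 + l 4 *\<^sub>R w 4 = 0"
    using dep4[of w] by blast
  have c1: "l 1 * Re (F 1$1$1 - F 1$2$2) + l 2 * Re (F 2$1$1 - F 2$2$2) + l 3 * Re (F 3$1$1 - F 3$2$2) + l 4 * Re (F 4$1$1 - F 4$2$2) = 0"
    using arg_cong[OF ls, of "\<lambda>v. v$1"] by (simp add: w_def)
  have c2: "l 1 * Re (F 1$1$2) + l 2 * Re (F 2$1$2) + l 3 * Re (F 3$1$2) + l 4 * Re (F 4$1$2) = 0"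
    using arg_cong[OF ls, of "\<lambda>v. v$2"] by (simp add: w_def)
  have c3: "l 1 * Im (F 1$1$2) + l 2 * Im (F 2$1$2) + l 3 * Im (F 3$1$2) + l 4 * Im (F 4$1$2) = 0"
    using arg_cong[OF ls, of "\<lambda>v. v$3"] by (simp add: w_def)
  define D where "D = l 1 * Re (F 1$2$2) + l 2 * Re (F 2$2$2) + l 3 * Re (F 3$2$2) + l 4 * Re (F 4$2$2)"
  have key: "l 1 * G x 1 + l 2 * G x 2 + l 3 * G x 3 + l 4 * G x 4 = D" if x: "x \<in> bitstrings4" for x
  proof -
    have gf: "G x i = Re (F i$2$2) + Re (F i$1$1 - F i$2$2) * Re (\<rho> x$1$1)
     + 2 * Re (F i$1$2) * Re (\<rho> x$1$2) + 2 * Im (F i$1$2) * Im (\<rho> x$1$2)" if "i \<in> {1..4}" for i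
      unfolding G_def using trace_formula[OF hF[OF that] hr[OF x]] .
    have "l 1 * G x 1 + l 2 * G x 2 + l 3 * G x 3 + l 4 * G x 4 = D
      + Re (\<rho> x$1$1) * (l 1 * Re (F 1$1$1 - F 1$2$2) + l 2 * Re (F 2$1$1 - F 2$2$2) + l 3 * Re (F 3$1$1 - F 3$2$2) + l 4 * Re (F 4$1$1 - F 4$2$2))
      + 2 * Re (\<rho> x$1$2) * (l 1 * Re (F 1$1$2) + l 2 * Re (F 2$1$2) + l 3 * Re (F 3$1$2) + l 4 * Re (F 4$1$2))
      + 2 * Im (\<rho> x$1$2) * (l 1 * Im (F 1$1$2) + l 2 * Im (F 2$1$2) + l 3 * Im (F 3$1$2) + l 4 * Im (F 4$1$2))"
      unfolding D_def by (simp add: gf algebra_simps del: minus_complex.sel)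
    thus ?thesis using c1 c2 c3 by simp
  qed
  have ab: "(p - 1/2) * (\<bar>l 1\<bar> + \<bar>l 2\<bar> + \<bar>l 3\<bar> + \<bar>l 4\<bar>) > 0"
    using pp lnz by (intro mult_pos_pos) auto
  show False
  proof (cases "D \<ge> (l 1 + l 2 + l 3 + l 4) / 2")
    case True
    define x where "x i = (i \<in> {1..4::nat} \<and> 0 < l i)" for i
    have xb: "x \<in> bitstrings4" unfolding bitstrings4_def x_def by auto
    have h: "l i * (G x i - 1/2) \<le> - ((p - 1/2) * \<bar>l i\<bar>)" if "i \<in> {1..4}" for i
      by (rule t1) (use G0[OF xb that] G1[OF xb that] that in \<open>auto simp: x_def\<close>)
    have "l 1 * (G x 1 - 1/2) + l 2 * (G x 2 - 1/2) + l 3 * (G x 3 - 1/2) + l 4 * (G x 4 - 1/2) \<le>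
       - ((p - 1/2) * (\<bar>l 1\<bar> + \<bar>l 2\<bar> + \<bar>l 3\<bar> + \<bar>l 4\<bar>))"
      using h[of 1] h[of 2] h[of 3] h[of 4] by (simp add: algebra_simps)
    moreover have "l 1 * (G x 1 - 1/2) + l 2 * (G x 2 - 1/2) + l 3 * (G x 3 - 1/2) + l 4 * (G x 4 - 1/2)
       = D - (l 1 + l 2 + l 3 + l 4) / 2" using key[OF xb] by (simp add: algebra_simps)
    ultimately show False using True ab by linarith
  next
    case False
    define x where "x i = (i \<in> {1..4::nat} \<and> l i < 0)" for i
    have xb: "x \<in> bitstrings4" unfolding bitstrings4_def x_def by auto
    have h: "l i * (G x i - 1/2) \<ge> (p - 1/2) * \<bar>l i\<bar>" if "i \<in> {1..4}" for i
      by (rule t2) (use G0[OF xb that] G1[OF xb that] that in \<open>auto simp: x_def\<close>)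
    have "l 1 * (G x 1 - 1/2) + l 2 * (G x 2 - 1/2) + l 3 * (G x 3 - 1/2) + l 4 * (G x 4 - 1/2) \<ge>
       (p - 1/2) * (\<bar>l 1\<bar> + \<bar>l 2\<bar> + \<bar>l 3\<bar> + \<bar>l 4\<bar>)"
      using h[of 1] h[of 2] h[of 3] h[of 4] by (simp add: algebra_simps)
    moreover have "l 1 * (G x 1 - 1/2) + l 2 * (G x 2 - 1/2) + l 3 * (G x 3 - 1/2) + l 4 * (G x 4 - 1/2)
       = D - (l 1 + l 2 + l 3 + l 4) / 2" using key[OF xb] by (simp add: algebra_simps)
    ultimately show False using False ab by linarith
  qed
qed

end
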